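(* Let $\lambda\in\mathbb C$ be a root of $\chi(\lambda)=\prod_{k=1}^{m-1}(\lambda+k)-m!$ with $\Re(\lambda)>-\frac12$, and let $C\in\mathbb C$. Then the smoothing transformation $K$ maps $\mathcal M_2(C)$ into itself.
   Context: $m\ge2$ is an integer. $T=\tau_{(1)}+\dots+\tau_{(m-1)}$ where the $\tau_{(j)}$ are independent and $\tau_{(j)}$ is exponential with parameter $j$ (so $T$ has density $(m-1)e^{-u}(1-e^{-u})^{m-2}$ on $\mathbb R_+$). For $C\in\mathbb C$, $\mathcal M_2(C)$ is the set of probability distributions on $\mathbb C$ with finite second absolute moment and expectation $C$. For a probability measure $\mu$ on $\mathbb C$, $K\mu$ is the law of $e^{-\lambda T}(Z^{(1)}+\dots+Z^{(m)})$, where $Z^{(1)},\dots,Z^{(m)}$ are independent with law $\mu$ and independent of $T$. *)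

theory Defs
  imports "HOL-Probability.Probability"
begin

text \<open>Law of T = tau_1 + ... + tau_(m-1) (independent exponentials with
parameters 1..m-1), given by its density (m-1) e^{-u} (1-e^{-u})^{m-2} on R_+.\<close>
definition T_law :: "nat \<Rightarrow> real measure" where
  "T_law m = density lborel
     (\<lambda>u. ennreal (indicator {0..} u * (real m - 1) * exp (- u) * (1 - exp (- u)) ^ (m - 2)))"

definition chi :: "nat \<Rightarrow> complex \<Rightarrow> complex" where
  "chi m l = (\<Prod>k=1..m-1. l + of_nat k) - of_nat (fact m)"

definition M2 :: "complex \<Rightarrow> complex measure set" where
  "M2 C = {\<mu>. prob_space \<mu> \<and> sets \<mu> = sets borel \<and>
              integrable \<mu> (\<lambda>z. (cmod z)\<^sup>2) \<and> integrable \<mu> (\<lambda>z. z) \<and>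
              (\<integral>z. z \<partial>\<mu>) = C}"

definition K :: "nat \<Rightarrow> complex \<Rightarrow> complex measure \<Rightarrow> complex measure" where
  "K m l \<mu> = distr (T_law m \<Otimes>\<^sub>M (\<Pi>\<^sub>M i\<in>{..<m}. \<mu>)) borel
     (\<lambda>(t, z). exp (- (l * complex_of_real t)) * (\<Sum>i<m. z i))"

end

theory Submission
  imports Defs "HOL-Probability.Probability"
begin


lemma exp_int_Ioi:
  fixes a :: complex assumes a: "Re a > 0"
  shows "set_integrable lborel {0<..} (\<lambda>u::real. exp (- (a * of_real u)))"
    and "(LBINT u:{0<..}. exp (- (a * of_real u))) = 1 / a"
proof -
  have ab: "set_integrable lborel {0<..} (\<lambda>x::real. exp (-(x * Re a)))"
    using integrable_I0i_exp_mscale[OF a] .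
  show si: "set_integrable lborel {0<..} (\<lambda>u::real. exp (- (a * of_real u)))"
    unfolding set_integrable_def
  proof (rule Bochner_Integration.integrable_bound[OF ab[unfolded set_integrable_def]])
    show "(\<lambda>x. indicator {0<..} x *\<^sub>R exp (- (a * complex_of_real x))) \<in> borel_measurable lborel"
      by measurable
    show "AE x in lborel. norm (indicator {0<..} x *\<^sub>R exp (- (a * complex_of_real x)))
         \<le> norm (indicator {0<..} x *\<^sub>R exp (- (x * Re a)))"
      by (auto simp: indicator_def norm_exp_eq_Re mult.commute)
  qed
  have a0: "a \<noteq> 0" using a by auto
  let ?F = "\<lambda>u::real. - exp (- (a * of_real u)) / a"
  have "(LBINT u=0..\<infinity>. exp (- (a * of_real u))) = 0 - (- 1 / a)"
  proof (rule interval_integral_FTC_integrable)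
    show "(0::ereal) < \<infinity>" by simp
    fix x :: real
    show "(?F has_vector_derivative exp (- (a * of_real x))) (at x)"
    proof -
      have "((\<lambda>z. - exp (- (a * z)) / a) has_field_derivative exp (- (a * of_real x))) (at (of_real x))"
        using a0 by (auto intro!: derivative_eq_intros simp: field_simps)
      from has_vector_derivative_real_field[OF this] show ?thesis .
    qed
    show "isCont (\<lambda>u::real. exp (- (a * of_real u))) x" by (intro continuous_intros)
  next
    show "set_integrable lborel (einterval 0 \<infinity>) (\<lambda>u::real. exp (- (a * of_real u)))"
      using si by (simp add: zero_ereal_def einterval_def greaterThan_def)
    show "((?F \<circ> real_of_ereal) \<longlongrightarrow> - 1 / a) (at_right 0)"
      using a0 by (auto simp: zero_ereal_def ereal_tendsto_simps intro!: tendsto_eq_intros)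
    have *: "((\<lambda>t::real. exp (- (a * of_real t))) \<longlongrightarrow> 0) at_top"
    proof (rule tendsto_norm_zero_cancel)
      have "((\<lambda>t::real. exp (- (t * Re a))) \<longlongrightarrow> 0) at_top"
        using a by (auto intro!: exp_at_bot[THEN filterlim_compose] filterlim_tendsto_pos_mult_at_top filterlim_ident
             simp: filterlim_uminus_at_bot mult.commute[of _ "Re a"])
      then show "((\<lambda>t::real. norm (exp (- (a * of_real t)))) \<longlongrightarrow> 0) at_top"
        by (simp add: norm_exp_eq_Re mult.commute)
    qed
    show "((?F \<circ> real_of_ereal) \<longlongrightarrow> 0) (at_left \<infinity>)"
      unfolding ereal_tendsto_simps
      using tendsto_divide[OF tendsto_minus[OF *] tendsto_const[of a]] a0 by simp
  qed
  then show "(LBINT u:{0<..}. exp (- (a * of_real u))) = 1 / a"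
    by (simp add: interval_lebesgue_integral_0_infty)
qed

lemma exp_int:
  fixes a :: complex assumes a: "Re a > 0"
  shows "has_bochner_integral lborel (\<lambda>u::real. indicator {0..} u *\<^sub>R exp (- (a * of_real u))) (1 / a)"
proof -
  have h: "has_bochner_integral lborel (\<lambda>u::real. indicator {0<..} u *\<^sub>R exp (- (a * of_real u))) (1 / a)"
    using exp_int_Ioi[OF a] unfolding set_integrable_def set_lebesgue_integral_def
    by (simp add: has_bochner_integral_iff)
  then show ?thesis
    using AE_lborel_singleton[of 0]
    by (intro has_bochner_integral_cong_AE[THEN iffD1, OF _ _ _ h])
       (auto split: split_indicator)
qed



lemma binom_partial_frac:
  fixes x :: complex
  assumes "\<And>j. x + of_nat j \<noteq> 0"
  shows "(\<Sum>j\<le>n. of_nat (n choose j) * (-1)^j / (x + of_nat j)) = fact n / (\<Prod>j\<le>n. (x + of_nat j))"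
  using assms
proof (induction n arbitrary: x)
  case 0
  then show ?case by simp
next
  case (Suc n)
  define f where "f = (\<lambda>y::complex. \<Sum>j\<le>n. of_nat (n choose j) * (-1)^j / (y + of_nat j))"
  have x0: "x \<noteq> 0" using Suc.prems[of 0] by simp
  have nz1: "\<And>j. (x + 1) + of_nat j \<noteq> 0" using Suc.prems by (metis add.assoc of_nat_Suc add.commute)
  have IH0: "f x = fact n / (\<Prod>j\<le>n. (x + of_nat j))" unfolding f_def using Suc.IH Suc.prems by blast
  have IH1: "f (x+1) = fact n / (\<Prod>j\<le>n. (x + 1 + of_nat j))" unfolding f_def using Suc.IH nz1 by blast
  have fx: "f x = 1 / x + (\<Sum>k\<le>n. of_nat (n choose Suc k) * (-1)^(Suc k) / (x + of_nat (Suc k)))"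
  proof -
    have "f x = (\<Sum>j\<le>Suc n. of_nat (n choose j) * (-1)^j / (x + of_nat j))"
      unfolding f_def by (simp add: sum.atMost_Suc)
    also have "\<dots> = 1 / x + (\<Sum>k\<le>n. of_nat (n choose Suc k) * (-1)^(Suc k) / (x + of_nat (Suc k)))"
      by (subst sum.atMost_Suc_shift) simp
    finally show ?thesis .
  qed
  have lhs: "(\<Sum>j\<le>Suc n. of_nat (Suc n choose j) * (-1)^j / (x + of_nat j)) = f x - f (x+1)"
  proof -
    have "(\<Sum>j\<le>Suc n. of_nat (Suc n choose j) * (-1)^j / (x + of_nat j))
       = 1 / x + (\<Sum>k\<le>n. of_nat (Suc n choose Suc k) * (-1)^(Suc k) / (x + of_nat (Suc k)))"
      by (subst sum.atMost_Suc_shift) simp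
    also have "\<dots> = 1 / x + (\<Sum>k\<le>n. of_nat (n choose Suc k) * (-1)^(Suc k) / (x + of_nat (Suc k)))
                    - (\<Sum>k\<le>n. of_nat (n choose k) * (-1)^k / (x + 1 + of_nat k))"
      unfolding sum_subtractf[symmetric] add_diff_eq[symmetric]
    proof (intro arg_cong2[where f="(+)"] refl sum.cong)
      fix k assume "k \<in> {..n}"
      have d: "x + of_nat (Suc k) = x + 1 + of_nat k" by simp
      show "of_nat (Suc n choose Suc k) * (-1)^(Suc k) / (x + of_nat (Suc k)) =
        of_nat (n choose Suc k) * (-1)^(Suc k) / (x + of_nat (Suc k)) - of_nat (n choose k) * (-1)^k / (x + 1 + of_nat k)"
        unfolding d binomial_Suc_Suc of_nat_add power_Suc by (simp add: divide_inverse algebra_simps)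
    qed
    also have "\<dots> = f x - f (x+1)" using fx unfolding f_def by simp
    finally show ?thesis .
  qed
  define P where "P = (\<Prod>j\<le>n. (x + 1 + of_nat j))"
  define Q where "Q = (\<Prod>j\<le>n. (x + of_nat j))"
  have PQ: "(\<Prod>j\<le>Suc n. (x + of_nat j)) = x * P"
    unfolding P_def by (subst prod.atMost_Suc_shift) (simp add: add_ac)
  have PQ2: "x * P = Q * (x + of_nat (Suc n))"
    unfolding Q_def using PQ by (simp add: prod.atMost_Suc)
  have P0: "P \<noteq> 0" unfolding P_def using nz1 by simp
  have Q0: "Q \<noteq> 0" unfolding Q_def using Suc.prems by simp
  have "f x - f (x+1) = fact (Suc n) / (x * P)"
  proof -
    have "fact n / Q - fact n / P = fact n * (x*P - x*Q) / (x*P*Q)"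
      using P0 Q0 x0 by (simp add: field_simps)
    also have "x*P - x*Q = of_nat (Suc n) * Q" using PQ2 by (simp add: algebra_simps)
    also have "fact n * (of_nat (Suc n) * Q) / (x*P*Q) = fact (Suc n) / (x * P)"
      using Q0 P0 x0 by (simp add: fact_Suc field_simps)
    finally show ?thesis using IH0 IH1 unfolding P_def Q_def by simp
  qed
  then show ?case using lhs PQ by simp
qed



definition gd :: "nat \<Rightarrow> real \<Rightarrow> real" where
  "gd m u = indicator {0..} u * (real m - 1) * exp (- u) * (1 - exp (- u)) ^ (m - 2)"

lemma lap:
  fixes l :: complex
  assumes m: "m \<ge> 2" and l: "Re l > -1"
  shows "has_bochner_integral lborel (\<lambda>u. gd m u *\<^sub>R exp (- (l * of_real u)))
           (fact (m - 1) / (\<Prod>k=1..m-1. l + of_nat k))"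
proof -
  obtain n where mn: "m = Suc (Suc n)" using m by (metis add_2_eq_Suc le_Suc_ex)
  define c where "c = (\<lambda>j. of_nat (Suc n) * of_nat (n choose j) * (-1)^j :: complex)"
  have pw: "gd m u *\<^sub>R exp (- (l * of_real u)) =
     (\<Sum>j\<le>n. c j * (indicator {0..} u *\<^sub>R exp (- ((l + 1 + of_nat j) * of_real u))))" for u
  proof (cases "u \<ge> 0")
    case False then show ?thesis by (simp add: gd_def)
  next
    case True
    define E where "E = exp (- (of_real u :: complex))"
    have e1: "complex_of_real (exp (- u)) = E" by (metis E_def exp_of_real of_real_minus)
    have e2: "exp (- ((l + 1 + of_nat j) * of_real u)) = exp (- (l * of_real u)) * E * E ^ j" for j
    proof -
      have "exp (- ((l + 1 + of_nat j) * of_real u)) = exp (- (l * of_real u)) * E * exp (of_nat j * (- of_real u))"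
        by (simp add: E_def exp_add[symmetric] algebra_simps)
      also have "exp (of_nat j * (- of_real u)) = E ^ j" unfolding E_def by (rule exp_of_nat_mult)
      finally show ?thesis .
    qed
    have bin: "(1 - E) ^ n = (\<Sum>j\<le>n. of_nat (n choose j) * (- E) ^ j)"
      using binomial_ring[of "- E" 1 n] by simp
    have "gd m u *\<^sub>R exp (- (l * of_real u)) = of_nat (Suc n) * E * (1 - E) ^ n * exp (- (l * of_real u))"
    proof -
      have "gd m u = real (Suc n) * exp (- u) * (1 - exp (- u)) ^ n" using True by (simp add: gd_def mn)
      then show ?thesis
        by (simp only: scaleR_conv_of_real of_real_mult of_real_power of_real_diff of_real_1 e1 of_real_of_nat_eq)
    qed
    also have "\<dots> = (\<Sum>j\<le>n. c j * (exp (- (l * of_real u)) * E * E ^ j))"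
    proof -
      have "of_nat (Suc n) * E * (1 - E) ^ n * exp (- (l * of_real u)) =
          (\<Sum>j\<le>n. of_nat (Suc n) * E * (of_nat (n choose j) * (- E) ^ j) * exp (- (l * of_real u)))"
        unfolding bin sum_distrib_left sum_distrib_right ..
      also have "\<dots> = (\<Sum>j\<le>n. c j * (exp (- (l * of_real u)) * E * E ^ j))"
      proof (intro sum.cong refl)
        fix j
        show "of_nat (Suc n) * E * (of_nat (n choose j) * (- E) ^ j) * exp (- (l * of_real u)) =
          c j * (exp (- (l * of_real u)) * E * E ^ j)"
          unfolding c_def power_minus[of E j] by (simp only: ac_simps)
      qed
      finally show ?thesis .
    qed
    finally show ?thesis using True by (simp add: e2)
  qed
  have hb: "has_bochner_integral lborel (\<lambda>u. gd m u *\<^sub>R exp (- (l * of_real u)))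
            (\<Sum>j\<le>n. c j * (1 / (l + 1 + of_nat j)))"
    unfolding pw
    by (intro has_bochner_integral_sum has_bochner_integral_mult_right exp_int) (use l in simp)
  have nz: "\<And>j. (l + 1) + of_nat j \<noteq> 0"
  proof
    fix j assume "(l + 1) + of_nat j = 0"
    then have "Re ((l + 1) + of_nat j) = 0" by simp
    then show False using l by simp
  qed
  have "(\<Sum>j\<le>n. c j * (1 / (l + 1 + of_nat j))) = of_nat (Suc n) *
      (\<Sum>j\<le>n. of_nat (n choose j) * (-1)^j / ((l + 1) + of_nat j))"
    unfolding c_def sum_distrib_left by (intro sum.cong refl) simp
  also have "\<dots> = of_nat (Suc n) * (fact n / (\<Prod>j\<le>n. ((l + 1) + of_nat j)))"
    using binom_partial_frac[OF nz] by simp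
  also have "(\<Prod>j\<le>n. ((l + 1) + of_nat j)) = (\<Prod>k=1..m-1. l + of_nat k)"
    unfolding mn atMost_atLeast0 using prod.shift_bounds_cl_Suc_ivl[of "\<lambda>k. l + of_nat k" 0 n]
    by (simp add: add_ac)
  also have "of_nat (Suc n) * (fact n / (\<Prod>k=1..m-1. l + of_nat k)) = fact (m - 1) / (\<Prod>k=1..m-1. l + of_nat k)"
    by (simp add: mn fact_Suc)
  finally show ?thesis using hb by simp
qed



lemma T_law_gd: "T_law m = density lborel (\<lambda>u. ennreal (gd m u))"
  unfolding T_law_def gd_def ..

lemma gd_nonneg: "m \<ge> 2 \<Longrightarrow> 0 \<le> gd m u"
  unfolding gd_def by (auto simp: indicator_def intro!: mult_nonneg_nonneg zero_le_power)

lemma gd_meas[measurable]: "gd m \<in> borel_measurable borel"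
  unfolding gd_def by measurable

lemma sets_T_law[simp, measurable_cong]: "sets (T_law m) = sets borel"
  by (simp add: T_law_def)

lemma T_law_prob: assumes m: "m \<ge> 2" shows "prob_space (T_law m)"
proof
  have "has_bochner_integral lborel (\<lambda>u. gd m u *\<^sub>R exp (- ((0::complex) * of_real u)))
           (fact (m - 1) / (\<Prod>k=1..m-1. (0::complex) + of_nat k))"
    using lap[OF m, of 0] by simp
  moreover have "(\<Prod>k=1..m-1. (0::complex) + of_nat k) = fact (m - 1)"
    by (simp add: fact_prod)
  ultimately have "has_bochner_integral lborel (\<lambda>u. complex_of_real (gd m u)) 1"
    by (simp add: scaleR_conv_of_real)
  from has_bochner_integral_Re[OF this]
  have h: "has_bochner_integral lborel (gd m) 1" by (simp add: o_def)
  have "emeasure (T_law m) (space (T_law m)) = (\<integral>\<^sup>+u. ennreal (gd m u) \<partial>lborel)"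
    by (simp add: T_law_gd emeasure_density)
  also have "\<dots> = ennreal 1"
    using h gd_nonneg[OF m]
    by (subst nn_integral_eq_integral) (auto simp: has_bochner_integral_iff)
  finally show "emeasure (T_law m) (space (T_law m)) = 1" by simp
qed

lemma T_law_integrable_iff:
  fixes F :: "real \<Rightarrow> 'b::{banach, second_countable_topology}"
  assumes m: "m \<ge> 2" and [measurable]: "F \<in> borel_measurable borel"
  shows "integrable (T_law m) F \<longleftrightarrow> integrable lborel (\<lambda>u. gd m u *\<^sub>R F u)"
  unfolding T_law_gd using gd_nonneg[OF m]
  by (subst integrable_density) auto

lemma T_law_integral:
  fixes F :: "real \<Rightarrow> 'b::{banach, second_countable_topology}"
  assumes m: "m \<ge> 2" and [measurable]: "F \<in> borel_measurable borel"
  shows "integral\<^sup>L (T_law m) F = integral\<^sup>L lborel (\<lambda>u. gd m u *\<^sub>R F u)"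
  unfolding T_law_gd using gd_nonneg[OF m]
  by (subst integral_density) auto

lemma T_law_exp:
  fixes l :: complex
  assumes m: "m \<ge> 2" and l: "Re l > -1"
  shows "integrable (T_law m) (\<lambda>u. exp (- (l * of_real u)))"
    and "integral\<^sup>L (T_law m) (\<lambda>u. exp (- (l * of_real u))) = fact (m - 1) / (\<Prod>k=1..m-1. l + of_nat k)"
  using lap[OF m l]
  by (auto simp: T_law_integrable_iff[OF m] T_law_integral[OF m] has_bochner_integral_iff)

lemma T_law_exp_real:
  fixes a :: real
  assumes m: "m \<ge> 2" and a: "a > -1"
  shows "integrable (T_law m) (\<lambda>u. exp (- (a * u)))"
proof -
  have "integrable (T_law m) (\<lambda>u. exp (- (complex_of_real a * of_real u)))"
    using T_law_exp(1)[OF m, of "of_real a"] a by simp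
  from integrable_Re[OF this] show ?thesis
    by (simp flip: of_real_mult of_real_minus add: exp_of_real)
qed



lemma prod_integrable:
  fixes f :: "'a \<Rightarrow> 'c::{real_normed_field, banach, second_countable_topology}" and g :: "'b \<Rightarrow> 'c"
  assumes NA: "prob_space NA" and NB: "prob_space NB"
    and f: "integrable NA f" and g: "integrable NB g"
  shows "integrable (NA \<Otimes>\<^sub>M NB) (\<lambda>(x,y). f x * g y)"
    and "integral\<^sup>L (NA \<Otimes>\<^sub>M NB) (\<lambda>(x,y). f x * g y) = integral\<^sup>L NA f * integral\<^sup>L NB g"
proof -
  interpret Q1: prob_space NA by fact
  interpret Q2: prob_space NB by fact
  interpret pair_sigma_finite NA NB ..
  have [measurable]: "f \<in> borel_measurable NA" "g \<in> borel_measurable NB"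
    using f g by auto
  show int: "integrable (NA \<Otimes>\<^sub>M NB) (\<lambda>(x,y). f x * g y)"
  proof (rule Fubini_integrable)
    show "(\<lambda>(x,y). f x * g y) \<in> borel_measurable (NA \<Otimes>\<^sub>M NB)" by measurable
    have "integrable NA (\<lambda>x. norm (f x) * (\<integral>y. norm (g y) \<partial>NB))"
      using f by (intro integrable_mult_left) auto
    then show "integrable NA (\<lambda>x. \<integral>y. norm (case (x, y) of (x, y) \<Rightarrow> f x * g y) \<partial>NB)"
      by (simp add: norm_mult)
    show "AE x in NA. integrable NB (\<lambda>y. case (x, y) of (x, y) \<Rightarrow> f x * g y)"
      using g by simp
  qed
  have "integral\<^sup>L (NA \<Otimes>\<^sub>M NB) (\<lambda>(x,y). f x * g y) = (\<integral>x. (\<integral>y. f x * g y \<partial>NB) \<partial>NA)"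
    using integral_fst[of "\<lambda>x y. f x * g y"] int by simp
  also have "\<dots> = integral\<^sup>L NA f * integral\<^sup>L NB g"
    by (simp add: integral_mult_left)
  finally show "integral\<^sup>L (NA \<Otimes>\<^sub>M NB) (\<lambda>(x,y). f x * g y) = integral\<^sup>L NA f * integral\<^sup>L NB g" .
qed

lemma PiM_comp:
  fixes h :: "'a \<Rightarrow> 'c::{banach, second_countable_topology}"
  assumes mu: "prob_space \<mu>" and i: "i \<in> I" and h: "integrable \<mu> h"
  shows "integrable (PiM I (\<lambda>_. \<mu>)) (\<lambda>\<omega>. h (\<omega> i))"
    and "integral\<^sup>L (PiM I (\<lambda>_. \<mu>)) (\<lambda>\<omega>. h (\<omega> i)) = integral\<^sup>L \<mu> h"
proof -
  interpret product_prob_space "\<lambda>_. \<mu>" I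
    using mu by (simp add: product_prob_space_def product_sigma_finite_def prob_space_imp_sigma_finite
        product_prob_space_axioms_def)
  have [measurable]: "h \<in> borel_measurable \<mu>" using h by auto
  have d: "distr (PiM I (\<lambda>_. \<mu>)) \<mu> (\<lambda>\<omega>. \<omega> i) = \<mu>" using PiM_component[OF i] by simp
  have m: "(\<lambda>\<omega>. \<omega> i) \<in> measurable (PiM I (\<lambda>_. \<mu>)) \<mu>" using i by measurable
  show "integrable (PiM I (\<lambda>_. \<mu>)) (\<lambda>\<omega>. h (\<omega> i))"
    using integrable_distr_eq[OF m, of h] h d by simp
  show "integral\<^sup>L (PiM I (\<lambda>_. \<mu>)) (\<lambda>\<omega>. h (\<omega> i)) = integral\<^sup>L \<mu> h"
    using integral_distr[OF m, of h] d by simp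
qed

theorem lemma6p1:
  fixes m :: nat and l C :: complex
  assumes "m \<ge> 2"
    and "chi m l = 0"
    and "Re l > - 1/2"
  shows "\<forall>\<mu>\<in>M2 C. K m l \<mu> \<in> M2 C"
proof
  fix \<mu> assume "\<mu> \<in> M2 C"
  then have mu: "prob_space \<mu>" and smu[measurable_cong]: "sets \<mu> = sets borel"
    and i2: "integrable \<mu> (\<lambda>z. (cmod z)\<^sup>2)" and i1: "integrable \<mu> (\<lambda>z. z)"
    and e1: "(\<integral>z. z \<partial>\<mu>) = C"
    by (auto simp: M2_def)
  have m: "m \<ge> 2" by fact
  define P where "P = PiM {..<m} (\<lambda>_. \<mu>)"
  define S where "S = (\<lambda>z::nat \<Rightarrow> complex. \<Sum>i<m. z i)"
  have pT: "prob_space (T_law m)" using T_law_prob[OF m] .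
  have pP: "prob_space P" unfolding P_def using mu by (intro prob_space_PiM) auto
  have pTP: "prob_space (T_law m \<Otimes>\<^sub>M P)" using pT pP by (rule prob_space_pair)
  have S_meas[measurable]: "S \<in> borel_measurable P"
    unfolding S_def P_def by measurable
  have Phi_meas[measurable]: "(\<lambda>(t, z). exp (- (l * complex_of_real t)) * S z) \<in> borel_measurable (T_law m \<Otimes>\<^sub>M P)"
    by measurable
  have Kdef: "K m l \<mu> = distr (T_law m \<Otimes>\<^sub>M P) borel (\<lambda>(t, z). exp (- (l * complex_of_real t)) * S z)"
    unfolding K_def P_def S_def ..
  have comp: "integrable P (\<lambda>z. z i)" "integral\<^sup>L P (\<lambda>z. z i) = C" if "i < m" for i
    using PiM_comp[OF mu _ i1, of i "{..<m}"] that e1 by (auto simp: P_def)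
  have comp2: "integrable P (\<lambda>z. (cmod (z i))\<^sup>2)" if "i < m" for i
    using PiM_comp[OF mu _ i2, of i "{..<m}"] that by (auto simp: P_def)
  have S_int: "integrable P S" unfolding S_def using comp by auto
  have S_E: "integral\<^sup>L P S = of_nat m * C"
  proof -
    have "integral\<^sup>L P S = (\<Sum>i<m. integral\<^sup>L P (\<lambda>z. z i))"
      unfolding S_def using Bochner_Integration.integral_sum[of "{..<m}" P "\<lambda>i z. z i"] comp by simp
    also have "\<dots> = (\<Sum>i<m. C)" using comp by simp
    finally show ?thesis by simp
  qed
  have S2_int: "integrable P (\<lambda>z. (cmod (S z))\<^sup>2)"
  proof (rule Bochner_Integration.integrable_bound)
    show "integrable P (\<lambda>z. real m * (\<Sum>i<m. (cmod (z i))\<^sup>2))"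
      using comp2 by (intro integrable_mult_right integrable_sum) auto
    show "(\<lambda>z. (cmod (S z))\<^sup>2) \<in> borel_measurable P" by measurable
    show "AE z in P. norm ((cmod (S z))\<^sup>2) \<le> norm (real m * (\<Sum>i<m. (cmod (z i))\<^sup>2))"
    proof (intro AE_I2)
      fix z :: "nat \<Rightarrow> complex"
      have "cmod (S z) \<le> (\<Sum>i<m. cmod (z i))" unfolding S_def by (rule norm_sum)
      then have "(cmod (S z))\<^sup>2 \<le> (\<Sum>i<m. cmod (z i))\<^sup>2" by (intro power_mono) auto
      also have "\<dots> \<le> (\<Sum>i<m. (cmod (z i))\<^sup>2) * card {..<m}" by (rule sum_squared_le_sum_of_squares)
      finally show "norm ((cmod (S z))\<^sup>2) \<le> norm (real m * (\<Sum>i<m. (cmod (z i))\<^sup>2))"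
        by (simp add: mult.commute sum_nonneg)
    qed
  qed
  have l1: "Re l > -1" using assms(3) by simp
  have Texp: "integrable (T_law m) (\<lambda>t. exp (- (l * complex_of_real t)))"
    "integral\<^sup>L (T_law m) (\<lambda>t. exp (- (l * complex_of_real t))) = fact (m - 1) / (\<Prod>k=1..m-1. l + of_nat k)"
    using T_law_exp[OF m l1] by auto
  have Texp2: "integrable (T_law m) (\<lambda>t. exp (- ((2 * Re l) * t)))"
    using T_law_exp_real[OF m, of "2 * Re l"] assms(3) by simp
  have prodval: "(\<Prod>k=1..m-1. l + of_nat k) = fact m"
    using assms(2) by (simp add: chi_def)
  show "K m l \<mu> \<in> M2 C"
    unfolding M2_def
  proof (intro CollectI conjI)
    show "prob_space (K m l \<mu>)" unfolding Kdef
      by (intro prob_space.prob_space_distr[OF pTP]) measurable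
    show "sets (K m l \<mu>) = sets borel" unfolding Kdef by simp
    show "integrable (K m l \<mu>) (\<lambda>z. (cmod z)\<^sup>2)"
      unfolding Kdef
    proof (subst integrable_distr_eq)
      have "integrable (T_law m \<Otimes>\<^sub>M P) (\<lambda>(t, z). exp (- ((2 * Re l) * t)) * (cmod (S z))\<^sup>2)"
        by (rule prod_integrable(1)[OF pT pP Texp2 S2_int])
      moreover have "(cmod (exp (- (l * complex_of_real t)) * S z))\<^sup>2 = exp (- ((2 * Re l) * t)) * (cmod (S z))\<^sup>2" for t z
        by (simp add: norm_mult power_mult_distrib norm_exp_eq_Re exp_double[symmetric] algebra_simps)
      ultimately show "integrable (T_law m \<Otimes>\<^sub>M P) (\<lambda>x. (cmod (case x of (t, z) \<Rightarrow> exp (- (l * complex_of_real t)) * S z))\<^sup>2)"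
        by (simp add: case_prod_unfold)
    qed measurable
    have intPhi: "integrable (T_law m \<Otimes>\<^sub>M P) (\<lambda>(t, z). exp (- (l * complex_of_real t)) * S z)"
      by (rule prod_integrable(1)[OF pT pP Texp(1) S_int])
    show "integrable (K m l \<mu>) (\<lambda>z. z)"
      unfolding Kdef by (subst integrable_distr_eq) (use intPhi in \<open>auto\<close>)
    have "(\<integral>z. z \<partial>K m l \<mu>) = integral\<^sup>L (T_law m \<Otimes>\<^sub>M P) (\<lambda>(t, z). exp (- (l * complex_of_real t)) * S z)"
      unfolding Kdef by (subst integral_distr) auto
    also have "\<dots> = fact (m - 1) / fact m * (of_nat m * C)"
      using prod_integrable(2)[OF pT pP Texp(1) S_int] Texp(2) S_E prodval by simp
    also have "\<dots> = C"
    proof -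
      obtain k where "m = Suc k" using m by (cases m) auto
      then have f: "(fact m :: complex) = of_nat m * fact k" by (simp add: fact_Suc)
      have "(fact k :: complex) \<noteq> 0" by simp
      moreover have "(of_nat m :: complex) \<noteq> 0" using m by simp
      moreover have "m - 1 = k" using \<open>m = Suc k\<close> by simp
      ultimately show ?thesis unfolding f by simp
    qed
    finally show "(\<integral>z. z \<partial>K m l \<mu>) = C" .
  qed
qed


end
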